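(* Let $\mathbf{A}$ be an algebra, let $\mathrm{Adm}(\mathbf{A})$ denote the set of all reflexive compatible binary relations on $\mathbf{A}$, and let $F,G:\mathrm{Adm}(\mathbf{A})\to\mathrm{Adm}(\mathbf{A})$ be arbitrary functions. Suppose that $\mathbf{A}$ has a ternary term $t$ which is Mal'cev modulo $F$ and $G$, i.e. for all $a,b\in A$ and all $R\in\mathrm{Adm}(\mathbf{A})$ with $aRb$ we have $(a,t(a,b,b))\in F(R)$ and $(t(a,a,b),b)\in G(R)$. Then for all $R,S,R_1,R_2,\dots\in\mathrm{Adm}(\mathbf{A})$ and all (arbitrary) binary relations $\theta,\theta_1,\theta_2\subseteq A^2$, the following hold: (i) If $a,b,c,d\in A$ satisfy $aRb$, $b\,\theta_1\,c$, $a\,\theta_2\,d$, $dSc$ and $b\,\theta\, d$, then $(a,c)\in F(R)\circ\overline{\theta_2\cup\theta\cup\theta_1}\circ G(S)$. (ii) $R\circ\theta\circ S\subseteq F(R)\circ\overline{(R\circ\theta)\cup(\theta\circ S)}\circ G(S)$. (iii) $R\circ S\subseteq F(R)\circ\overline{R\cup S}\circ G(S)\subseteq F(R)\circ S\circ R\circ G(S)$. (iv) For every $n\ge 0$, $R\circ_{n+2}S\subseteq F(R)\circ\big(\overline{F(R)\cup F(S)}\big)^n\circ\overline{R\cup S}\circ\big(\overline{G(R)\cup G(S)}\big)^n\circ G(S^\bullet)$, where $S^\bullet=S$ if $n$ is even and $S^\bullet=R$ if $n$ is odd. (v) $R+S\subseteq (F(R)+F(S))\circ\overline{R\cup S}\circ(G(R)+G(S))\subseteq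 (F(R)+F(S))\circ R\circ S\circ(G(R)+G(S))$. (vi) $R\circ R\subseteq F(R)\circ R\circ G(R)$. (vii) For every $n\ge 0$, $R^{n+1}\subseteq (F(R))^n\circ R\circ (G(R))^n$. (viii) $R^*\subseteq (F(R))^*\circ R\circ (G(R))^*$. (ix) $R^-\subseteq F(R^-)\circ R\circ G(R^-)$, and $R\subseteq F(R)\circ R^-\circ G(R)$. (x) $R+S^-\subseteq (F(R)+F(S^-))\circ\overline{R\cup S}\circ(G(R)+G(S^-))\subseteq (F(R)+F(S^-))\circ R\circ S\circ(G(R)+G(S^-))$. (xi) $\mathrm{Cg}(R)\subseteq (F(R)+F(R^-))\circ R\circ (G(R)+G(R^-))$. (xii) For $n\ge 2$, $R_1\circ R_2\circ\dots\circ R_n\subseteq F(R_1)\circ\overline{F(R_1)\cup F(R_2)}\circ\overline{F(R_1)\cup F(R_2)\cup F(R_3)}\circ\dots\circ\overline{F(R_1)\cup\dots\cup F(R_{n-2})}\circ\overline{F(R_1)\cup\dots\cup F(R_{n-1})}\circ\overline{R_1\cup R_2\cup\dots\cup R_n}\circ\overline{G(R_2)\cup G(R_3)\cup\dots\cup G(R_n)}\circ\overline{G(R_3)\cup\dots\cup G(R_n)}\circ\dots\circ\overline{G(R_{n-2})\cup G(R_{n-1})\cup G(R_n)}\circ\overline{G(R_{n-1})\cup G(R_n)}\circ G(R_n)$. (xiii) $R_1+R_2+\dots+R_n\subseteq\big(F(R_1)+F(R_2)+\dots+F(R_n)\big)\circ\overline{R_1\cup R_2\cup\dots\cup R_n}\circ\big(G(R_1)+G(R_2)+\dots+G(R_n)\big)$.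 (xiv) $\mathrm{Cg}(R_1\cup R_2\cup\dots\cup R_n)\subseteq\big(F(R_1)+F(R_1^-)+F(R_2)+F(R_2^-)+\dots+F(R_n)+F(R_n^-)\big)\circ\overline{R_1\cup R_2\cup\dots\cup R_n}\circ\big(G(R_1)+G(R_1^-)+G(R_2)+G(R_2^-)+\dots+G(R_n)+G(R_n^-)\big)$.
   Context: "Admissible" and "compatible" mean the same thing (closed under the basic operations of the algebra, coordinatewise). Relational composition: $R\circ S=\{(a,c):\exists b\,(aRb \text{ and } bSc)\}$. $R\circ_n S$ denotes $R\circ S\circ R\circ S\circ\cdots$ with $n-1$ occurrences of $\circ$ (i.e. $n$ alternating factors starting with $R$). $R^n=R\circ_n R$, with the convention $R^0$ = the identity relation. $R+S=\bigcup_{n\ge1}R\circ_n S$, and $R_1+R_2+\dots+R_n$ is the analogous union of all finite compositions of the $R_i$ (iterated $+$). $R^-$ is the converse of $R$, $R^*$ is the transitive closure of $R$, $\mathrm{Cg}(R)$ is the smallest congruence containing $R$, and $\overline{R}$ denotes the least compatible relation containing $R$. *)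

theory Defs
  imports Main
begin

text \<open>An algebra is given by a carrier set A and a set of basic operations,
each a pair (n, f) of an arity n and a function f on lists of length n.\<close>

definition algebra :: "'a set \<Rightarrow> (nat \<times> ('a list \<Rightarrow> 'a)) set \<Rightarrow> bool" where
  "algebra A ops \<longleftrightarrow>
     (\<forall>(n, f) \<in> ops. \<forall>xs. length xs = n \<and> set xs \<subseteq> A \<longrightarrow> f xs \<in> A)"

inductive_set term3 :: "(nat \<times> ('a list \<Rightarrow> 'a)) set \<Rightarrow> ('a \<Rightarrow> 'a \<Rightarrow> 'a \<Rightarrow> 'a) set"
  for ops where
  proj1: "(\<lambda>x y z. x) \<in> term3 ops"
| proj2: "(\<lambda>x y z. y) \<in> term3 ops"
| proj3: "(\<lambda>x y z. z) \<in> term3 ops"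
| app: "(n, f) \<in> ops \<Longrightarrow> length ts = n \<Longrightarrow> (\<forall>t\<in>set ts. t \<in> term3 ops)
        \<Longrightarrow> (\<lambda>x y z. f (map (\<lambda>t. t x y z) ts)) \<in> term3 ops"

definition compatible :: "(nat \<times> ('a list \<Rightarrow> 'a)) set \<Rightarrow> 'a rel \<Rightarrow> bool" where
  "compatible ops R \<longleftrightarrow>
     (\<forall>(n, f) \<in> ops. \<forall>xs ys. length xs = n \<and> length ys = n \<and>
        list_all2 (\<lambda>x y. (x, y) \<in> R) xs ys \<longrightarrow> (f xs, f ys) \<in> R)"

definition Adm :: "'a set \<Rightarrow> (nat \<times> ('a list \<Rightarrow> 'a)) set \<Rightarrow> 'a rel set" where
  "Adm A ops = {R. R \<subseteq> A \<times> A \<and> refl_on A R \<and> compatible ops R}"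

text \<open>Least compatible relation on A containing R (the overline).\<close>
definition ccl :: "'a set \<Rightarrow> (nat \<times> ('a list \<Rightarrow> 'a)) set \<Rightarrow> 'a rel \<Rightarrow> 'a rel" where
  "ccl A ops R = \<Inter>{S. S \<subseteq> A \<times> A \<and> compatible ops S \<and> R \<subseteq> S}"

definition Cg :: "'a set \<Rightarrow> (nat \<times> ('a list \<Rightarrow> 'a)) set \<Rightarrow> 'a rel \<Rightarrow> 'a rel" where
  "Cg A ops R = \<Inter>{S. equiv A S \<and> compatible ops S \<and> R \<subseteq> S}"

text \<open>Alternating composition R o_n S with n factors, starting with R (n \<ge> 1).\<close>
fun altc :: "'a rel \<Rightarrow> 'a rel \<Rightarrow> nat \<Rightarrow> 'a rel" where
  "altc R S 0 = Id"
| "altc R S (Suc 0) = R"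
| "altc R S (Suc (Suc n)) = R O altc S R (Suc n)"

definition rplus :: "'a rel \<Rightarrow> 'a rel \<Rightarrow> 'a rel" where
  "rplus R S = (\<Union>n\<in>{1..}. altc R S n)"

fun comp_list :: "'a rel list \<Rightarrow> 'a rel" where
  "comp_list [] = Id"
| "comp_list (R # Rs) = R O comp_list Rs"

definition rplus_list :: "'a rel list \<Rightarrow> 'a rel" where
  "rplus_list Rs = \<Union>{comp_list ws | ws. ws \<noteq> [] \<and> set ws \<subseteq> set Rs}"

end

theory Submission
  imports Defs
begin


lemma compatibleI:
  "(\<And>n f xs ys. (n,f)\<in>ops \<Longrightarrow> length xs = n \<Longrightarrow> length ys = n \<Longrightarrow>
     list_all2 (\<lambda>x y. (x,y)\<in>R) xs ys \<Longrightarrow> (f xs, f ys) \<in> R) \<Longrightarrow> compatible ops R"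
  unfolding compatible_def by blast

lemma compatibleD:
  "compatible ops R \<Longrightarrow> (n,f)\<in>ops \<Longrightarrow> length xs = n \<Longrightarrow> length ys = n \<Longrightarrow>
     list_all2 (\<lambda>x y. (x,y)\<in>R) xs ys \<Longrightarrow> (f xs, f ys) \<in> R"
  unfolding compatible_def by blast

lemma la2_relcomp:
  "list_all2 (\<lambda>x y. (x,y) \<in> R O S) xs ys \<Longrightarrow>
   \<exists>zs. list_all2 (\<lambda>x y. (x,y) \<in> R) xs zs \<and> list_all2 (\<lambda>x y. (x,y) \<in> S) zs ys"
proof (induction rule: list_all2_induct)
  case Nil then show ?case by auto
next
  case (Cons x xs y ys)
  then obtain zs where "list_all2 (\<lambda>x y. (x,y) \<in> R) xs zs" "list_all2 (\<lambda>x y. (x,y) \<in> S) zs ys" by blast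
  moreover obtain z where "(x,z) \<in> R" "(z,y) \<in> S" using Cons by blast
  ultimately show ?case by (intro exI[of _ "z#zs"]) auto
qed

lemma compat_relcomp:
  assumes "compatible ops R" "compatible ops S" shows "compatible ops (R O S)"
proof (rule compatibleI)
  fix n f xs ys assume nf: "(n,f) \<in> ops" and l: "length xs = n" "length ys = n"
    and r: "list_all2 (\<lambda>x y. (x,y) \<in> R O S) xs ys"
  obtain zs where z: "list_all2 (\<lambda>x y. (x,y) \<in> R) xs zs" "list_all2 (\<lambda>x y. (x,y) \<in> S) zs ys"
    using la2_relcomp[OF r] by blast
  have "length zs = n" using z(1) l list_all2_lengthD by fastforce
  then have "(f xs, f zs) \<in> R" "(f zs, f ys) \<in> S"
    using assms nf l z compatibleD by blast+
  then show "(f xs, f ys) \<in> R O S" by blast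
qed

lemma la2_Id: "list_all2 (\<lambda>x y. (x,y) \<in> Id) xs ys \<Longrightarrow> xs = ys"
  by (induction rule: list_all2_induct) auto

lemma compat_Id: "compatible ops Id"
  by (rule compatibleI) (metis la2_Id pair_in_Id_conv list.rel_eq)

lemma compat_relpow: "compatible ops R \<Longrightarrow> compatible ops (R ^^ n)"
  by (induction n) (auto simp: compat_Id compat_relcomp)

lemma compat_comp_list: "(\<forall>x\<in>set xs. compatible ops x) \<Longrightarrow> compatible ops (comp_list xs)"
  by (induction xs) (auto simp: compat_Id compat_relcomp)

lemma compat_converse: assumes "compatible ops R" shows "compatible ops (R\<inverse>)"
proof (rule compatibleI)
  fix n f xs ys assume nf: "(n,f) \<in> ops" and l: "length xs = n" "length ys = n"
    and r: "list_all2 (\<lambda>x y. (x,y) \<in> R\<inverse>) xs ys"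
  have "list_all2 (\<lambda>x y. (x,y) \<in> R) ys xs" using r by (simp add: list_all2_conv_all_nth)
  then have "(f ys, f xs) \<in> R" using assms nf l compatibleD by blast
  then show "(f xs, f ys) \<in> R\<inverse>" by simp
qed

lemma la2_setD: "list_all2 (\<lambda>x y. (x,y) \<in> A \<times> A) xs ys \<Longrightarrow> set xs \<subseteq> A \<and> set ys \<subseteq> A"
  by (induction rule: list_all2_induct) auto

lemma algebraD: assumes "algebra A ops" "(n,f)\<in>ops" "length xs = n" "set xs \<subseteq> A" shows "f xs \<in> A"
  using bspec[OF assms(1)[unfolded algebra_def] assms(2)] assms(3,4) by simp

lemma compat_AA: assumes "algebra A ops" shows "compatible ops (A \<times> A)"
proof (rule compatibleI)
  fix n f xs ys assume nf: "(n,f) \<in> ops" and l: "length xs = n" "length ys = n"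
    and r: "list_all2 (\<lambda>x y. (x,y) \<in> A \<times> A) xs ys"
  from la2_setD[OF r] have "set xs \<subseteq> A" "set ys \<subseteq> A" by auto
  then have "f xs \<in> A" "f ys \<in> A" using algebraD[OF assms nf] l by blast+
  then show "(f xs, f ys) \<in> A \<times> A" by simp
qed

lemma compat_Inter: assumes "\<forall>S\<in>SS. compatible ops S" shows "compatible ops (\<Inter>SS)"
proof (rule compatibleI)
  fix n f xs ys assume nf: "(n,f) \<in> ops" and l: "length xs = n" "length ys = n"
    and r: "list_all2 (\<lambda>x y. (x,y) \<in> \<Inter>SS) xs ys"
  show "(f xs, f ys) \<in> \<Inter>SS"
  proof (rule InterI)
    fix S assume S: "S \<in> SS"
    have "list_all2 (\<lambda>x y. (x,y) \<in> S) xs ys" using r by (rule list_all2_mono) (use S in blast)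
    then show "(f xs, f ys) \<in> S" using assms S nf l compatibleD by blast
  qed
qed

lemma compat_Int: "compatible ops S \<Longrightarrow> compatible ops T \<Longrightarrow> compatible ops (S \<inter> T)"
  using compat_Inter[of "{S,T}" ops] by simp

lemma ccl_sub: "K \<subseteq> A \<times> A \<Longrightarrow> algebra A ops \<Longrightarrow> ccl A ops K \<subseteq> A \<times> A"
  unfolding ccl_def by (rule Inter_lower) (simp add: compat_AA)

lemma ccl_compat: "compatible ops (ccl A ops K)"
  unfolding ccl_def by (rule compat_Inter) auto

lemma ccl_incl: "K \<subseteq> A \<times> A \<Longrightarrow> algebra A ops \<Longrightarrow> K \<subseteq> ccl A ops K"
  unfolding ccl_def by (rule Inter_greatest) auto

lemma ccl_least: "K \<subseteq> A \<times> A \<Longrightarrow> algebra A ops \<Longrightarrow> K \<subseteq> T \<Longrightarrow> compatible ops T \<Longrightarrow> ccl A ops K \<subseteq> T"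
  unfolding ccl_def
  apply (rule subset_trans[of _ "T \<inter> A \<times> A"])
   apply (rule Inter_lower) apply (simp add: compat_Int compat_AA)
  by (rule Int_lower1)

lemma ccl_mono: "K \<subseteq> K' \<Longrightarrow> ccl A ops K \<subseteq> ccl A ops K'"
  unfolding ccl_def by (rule Inter_anti_mono) auto

lemma ccl_id: "C \<subseteq> A \<times> A \<Longrightarrow> algebra A ops \<Longrightarrow> compatible ops C \<Longrightarrow> ccl A ops C = C"
  by (rule equalityI[OF ccl_least[OF _ _ subset_refl] ccl_incl])

lemma term3_compat:
  assumes "t \<in> term3 ops" "compatible ops R"
  shows "(a1,b1) \<in> R \<Longrightarrow> (a2,b2) \<in> R \<Longrightarrow> (a3,b3) \<in> R \<Longrightarrow> (t a1 a2 a3, t b1 b2 b3) \<in> R"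
  using assms(1)
proof (induction rule: term3.induct)
  case (app n f ts)
  have "list_all2 (\<lambda>x y. (x,y) \<in> R) (map (\<lambda>t. t a1 a2 a3) ts) (map (\<lambda>t. t b1 b2 b3) ts)"
    using app(3) \<open>(a1,b1) \<in> R\<close> \<open>(a2,b2) \<in> R\<close> \<open>(a3,b3) \<in> R\<close>
    by (auto simp: list_all2_map1 list_all2_map2 list_all2_same)
  then show ?case using compatibleD[OF assms(2) app(1)] app(2) by simp
qed auto

lemma compat_Id_on: assumes "algebra A ops" shows "compatible ops (Id_on A)"
proof (rule compatibleI)
  fix n f xs ys assume nf: "(n,f) \<in> ops" and l: "length xs = n" "length ys = n"
    and r: "list_all2 (\<lambda>x y. (x,y) \<in> Id_on A) xs ys"
  have "xs = ys" using r by (induction rule: list_all2_induct) auto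
  moreover have "list_all2 (\<lambda>x y. (x,y) \<in> A \<times> A) xs ys" using r by (rule list_all2_mono) blast
  ultimately have "set xs \<subseteq> A" using la2_setD by blast
  then have "f xs \<in> A" using algebraD[OF assms nf] l by blast
  then show "(f xs, f ys) \<in> Id_on A" using \<open>xs = ys\<close> by (simp add: Id_onI)
qed

lemma term3_A:
  assumes "t \<in> term3 ops" "algebra A ops" "a \<in> A" "b \<in> A" "c \<in> A"
  shows "t a b c \<in> A"
  using term3_compat[OF assms(1) compat_Id_on[OF assms(2)], of a a b b c c] assms by auto


lemma AdmD: assumes "R \<in> Adm A ops"
  shows "R \<subseteq> A \<times> A" "compatible ops R" "\<And>a. a \<in> A \<Longrightarrow> (a,a) \<in> R"
  using assms unfolding Adm_def refl_on_def by auto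

lemma AdmI: "R \<subseteq> A \<times> A \<Longrightarrow> compatible ops R \<Longrightarrow> (\<And>a. a \<in> A \<Longrightarrow> (a,a) \<in> R) \<Longrightarrow> R \<in> Adm A ops"
  unfolding Adm_def refl_on_def by auto

lemma Adm_converse: "R \<in> Adm A ops \<Longrightarrow> R\<inverse> \<in> Adm A ops"
  by (rule AdmI) (auto dest: AdmD simp: compat_converse)

lemma one_coord:
  assumes T: "\<forall>T\<in>TT. T \<in> Adm A ops" and nf: "(n,f)\<in>ops"
    and xy: "(x,y) \<in> (\<Union>TT)\<^sup>+"
  shows "set ps \<subseteq> A \<Longrightarrow> set qs \<subseteq> A \<Longrightarrow> length ps + Suc (length qs) = n \<Longrightarrow>
     (f (ps @ x # qs), f (ps @ y # qs)) \<in> (\<Union>TT)\<^sup>+"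
  using xy
proof (induction rule: trancl_induct)
  case (base y)
  then obtain T where TT: "T \<in> TT" "(x,y) \<in> T" by blast
  have "list_all2 (\<lambda>x y. (x,y) \<in> T) ps ps" "list_all2 (\<lambda>x y. (x,y) \<in> T) qs qs"
    using base(2,3) AdmD(3)[of T A ops] T TT by (auto simp: list_all2_same)
  then have "list_all2 (\<lambda>x y. (x,y) \<in> T) (ps @ x # qs) (ps @ y # qs)"
    using TT by (simp add: list_all2_appendI)
  then have "(f (ps @ x # qs), f (ps @ y # qs)) \<in> T"
    using compatibleD[OF AdmD(2)[of T A ops] nf] T TT base(4) by simp
  then show ?case using TT by blast
next
  case (step y z)
  then obtain T where TT: "T \<in> TT" "(y,z) \<in> T" by blast
  have "list_all2 (\<lambda>x y. (x,y) \<in> T) ps ps" "list_all2 (\<lambda>x y. (x,y) \<in> T) qs qs"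
    using step(4,5) AdmD(3)[of T A ops] T TT by (auto simp: list_all2_same)
  then have "list_all2 (\<lambda>x y. (x,y) \<in> T) (ps @ y # qs) (ps @ z # qs)"
    using TT by (simp add: list_all2_appendI)
  then have "(f (ps @ y # qs), f (ps @ z # qs)) \<in> T"
    using compatibleD[OF AdmD(2)[of T A ops] nf] T TT step(6) by simp
  then have "(f (ps @ y # qs), f (ps @ z # qs)) \<in> (\<Union>TT)\<^sup>+" using TT by blast
  with step(3)[OF step(4,5,6)] show ?case by (rule trancl_trans)
qed

lemma trancl_Union_sub: "\<forall>T\<in>TT. T \<in> Adm A ops \<Longrightarrow> (\<Union>TT)\<^sup>+ \<subseteq> A \<times> A"
  by (rule trancl_subset_Sigma) (auto dest: AdmD(1))

lemma la2_sub: "list_all2 (\<lambda>x y. (x,y) \<in> V) xs ys \<Longrightarrow> V \<subseteq> A \<times> A \<Longrightarrow> set xs \<subseteq> A \<and> set ys \<subseteq> A"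
  by (induction rule: list_all2_induct) auto

lemma compat_trancl_Union:
  assumes alg: "algebra A ops" and T: "\<forall>T\<in>TT. T \<in> Adm A ops" and ne: "TT \<noteq> {}"
  shows "compatible ops ((\<Union>TT)\<^sup>+)"
proof (rule compatibleI)
  fix n f xs ys assume nf: "(n,f) \<in> ops" and l: "length xs = n" "length ys = n"
    and r: "list_all2 (\<lambda>x y. (x,y) \<in> (\<Union>TT)\<^sup>+) xs ys"
  have VA: "(\<Union>TT)\<^sup>+ \<subseteq> A \<times> A" using trancl_Union_sub[OF T] .
  have "\<And>ps. set ps \<subseteq> A \<Longrightarrow> length ps + length xs = n \<Longrightarrow> (f (ps @ xs), f (ps @ ys)) \<in> (\<Union>TT)\<^sup>+"
    using r
  proof (induction rule: list_all2_induct)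
    case Nil
    have "f ps \<in> A" using algebraD[OF alg nf] Nil by simp
    moreover obtain T where "T \<in> TT" using ne by blast
    ultimately have "(f ps, f ps) \<in> \<Union>TT" using AdmD(3)[of T A ops] T by blast
    then show ?case by auto
  next
    case (Cons x xs y ys)
    have xA: "x \<in> A" "y \<in> A" using Cons(1) VA by auto
    have ysA: "set ys \<subseteq> A" using la2_sub[OF Cons(2) VA] by simp
    have 1: "(f (ps @ x # xs), f (ps @ x # ys)) \<in> (\<Union>TT)\<^sup>+"
      using Cons(3)[of "ps @ [x]"] Cons(4,5) xA by simp
    have l2: "length ys = length xs" using Cons(2) list_all2_lengthD by force
    have 2: "(f (ps @ x # ys), f (ps @ y # ys)) \<in> (\<Union>TT)\<^sup>+"
      using one_coord[OF T nf Cons(1), of ps ys] Cons(4,5) ysA l2 by simp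
    show ?case using trancl_trans[OF 1 2] by simp
  qed
  from this[of "[]"] l show "(f xs, f ys) \<in> (\<Union>TT)\<^sup>+" by simp
qed



lemma comp_list_append: "comp_list (xs @ ys) = comp_list xs O comp_list ys"
  by (induction xs) (auto simp: O_assoc)

lemma comp_list_mono: "list_all2 (\<subseteq>) xs ys \<Longrightarrow> comp_list xs \<subseteq> comp_list ys"
  by (induction rule: list_all2_induct) (auto simp: relcomp_mono)

lemma comp_list_mono_map: "(\<And>k. k \<in> set xs \<Longrightarrow> f k \<subseteq> g k) \<Longrightarrow> comp_list (map f xs) \<subseteq> comp_list (map g xs)"
  by (rule comp_list_mono) (simp add: list_all2_map1 list_all2_map2 list_all2_same)

lemma comp_list_shift_up: "(\<And>k. lo \<le> k \<Longrightarrow> k < hi \<Longrightarrow> f k \<subseteq> g (Suc k)) \<Longrightarrow>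
   comp_list (map f [lo..<hi]) \<subseteq> comp_list (map g [Suc lo..<Suc hi])"
proof -
  assume h: "\<And>k. lo \<le> k \<Longrightarrow> k < hi \<Longrightarrow> f k \<subseteq> g (Suc k)"
  have "comp_list (map f [lo..<hi]) \<subseteq> comp_list (map (g \<circ> Suc) [lo..<hi])"
    by (rule comp_list_mono_map) (use h in auto)
  also have "map (g \<circ> Suc) [lo..<hi] = map g [Suc lo..<Suc hi]"
    unfolding map_Suc_upt[symmetric] by simp
  finally show ?thesis .
qed

lemma comp_list_shift_down: "(\<And>k. lo \<le> k \<Longrightarrow> k < hi \<Longrightarrow> f (Suc k) \<subseteq> g k) \<Longrightarrow>
   comp_list (map f [Suc lo..<Suc hi]) \<subseteq> comp_list (map g [lo..<hi])"
proof -
  assume h: "\<And>k. lo \<le> k \<Longrightarrow> k < hi \<Longrightarrow> f (Suc k) \<subseteq> g k"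
  have "map f [Suc lo..<Suc hi] = map (f \<circ> Suc) [lo..<hi]"
    unfolding map_Suc_upt[symmetric] by simp
  also have "comp_list (map (f \<circ> Suc) [lo..<hi]) \<subseteq> comp_list (map g [lo..<hi])"
    by (rule comp_list_mono_map) (use h in auto)
  finally show ?thesis .
qed

lemma comp_list_pow: "(\<forall>x\<in>set xs. x \<subseteq> X) \<Longrightarrow> comp_list xs \<subseteq> X ^^ length xs"
proof (induction xs)
  case (Cons x xs)
  then have "comp_list (x # xs) \<subseteq> X O X ^^ length xs" by (auto intro!: relcomp_mono)
  then show ?case by (simp add: relpow_commute)
qed simp

lemma comp_list_trans_left: "trans X \<Longrightarrow> R0 \<subseteq> X \<Longrightarrow> (\<forall>x\<in>set xs. x \<subseteq> X) \<Longrightarrow> R0 O comp_list xs \<subseteq> X"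
proof (induction xs arbitrary: R0)
  case (Cons x xs)
  have "R0 O x \<subseteq> X" using Cons(2-4) by (meson relcomp_mono list.set_intros(1) order_trans trans_O_subset)
  then have "(R0 O x) O comp_list xs \<subseteq> X" using Cons by simp
  then show ?case by (simp add: O_assoc)
qed simp

lemma comp_list_trans_right: "trans X \<Longrightarrow> R0 \<subseteq> X \<Longrightarrow> (\<forall>x\<in>set xs. x \<subseteq> X) \<Longrightarrow> comp_list xs O R0 \<subseteq> X"
proof (induction xs)
  case (Cons x xs)
  then have "x O (comp_list xs O R0) \<subseteq> X O X" by (intro relcomp_mono) auto
  also have "\<dots> \<subseteq> X" using Cons(2) by (rule trans_O_subset)
  finally show ?case by (simp add: O_assoc)
qed simp

lemma comp_list_sub: "xs \<noteq> [] \<Longrightarrow> (\<forall>x\<in>set xs. x \<subseteq> A \<times> A) \<Longrightarrow> comp_list xs \<subseteq> A \<times> A"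
proof (induction xs)
  case (Cons x xs)
  show ?case
  proof (cases "xs = []")
    case True then show ?thesis using Cons by auto
  next
    case False then have "comp_list xs \<subseteq> A \<times> A" using Cons by auto
    then show ?thesis using Cons(3) by auto
  qed
qed simp

lemma trancl_comp_list: "(a,b) \<in> (\<Union>TT)\<^sup>+ \<Longrightarrow> \<exists>ws. ws \<noteq> [] \<and> set ws \<subseteq> TT \<and> (a,b) \<in> comp_list ws"
proof (induction rule: trancl_induct)
  case (base y)
  then obtain T where "T \<in> TT" "(a,y) \<in> T" by blast
  then show ?case by (intro exI[of _ "[T]"]) auto
next
  case (step y z)
  then obtain ws where ws: "ws \<noteq> []" "set ws \<subseteq> TT" "(a,y) \<in> comp_list ws" by blast
  obtain T where T: "T \<in> TT" "(y,z) \<in> T" using step by blast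
  have "(a,z) \<in> comp_list (ws @ [T])" using ws T by (auto simp: comp_list_append)
  then show ?case using ws T by (intro exI[of _ "ws @ [T]"]) auto
qed

lemma comp_list_trancl: "ws \<noteq> [] \<Longrightarrow> set ws \<subseteq> TT \<Longrightarrow> comp_list ws \<subseteq> (\<Union>TT)\<^sup>+"
proof (induction ws)
  case (Cons w ws)
  show ?case
  proof (cases "ws = []")
    case True then show ?thesis using Cons by auto
  next
    case False
    then have "comp_list ws \<subseteq> (\<Union>TT)\<^sup>+" using Cons by auto
    moreover have "w \<subseteq> (\<Union>TT)\<^sup>+" using Cons(3) by auto
    ultimately have "comp_list (w # ws) \<subseteq> (\<Union>TT)\<^sup>+ O (\<Union>TT)\<^sup>+" by (auto intro!: relcomp_mono)
    then show ?thesis using trans_O_subset[OF trans_trancl] by blast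
  qed
qed simp

lemma rplus_list_eq: "rplus_list rs = (\<Union>(set rs))\<^sup>+"
proof
  show "rplus_list rs \<subseteq> (\<Union>(set rs))\<^sup>+"
    unfolding rplus_list_def using comp_list_trancl by blast
  show "(\<Union>(set rs))\<^sup>+ \<subseteq> rplus_list rs"
  proof
    fix p assume "p \<in> (\<Union>(set rs))\<^sup>+"
    then obtain a b where p: "p = (a,b)" "(a,b) \<in> (\<Union>(set rs))\<^sup>+" by (cases p) auto
    from trancl_comp_list[OF p(2)] obtain ws where "ws \<noteq> []" "set ws \<subseteq> set rs" "(a,b) \<in> comp_list ws"
      by blast
    then show "p \<in> rplus_list rs" unfolding rplus_list_def p by blast
  qed
qed

lemma altc_comp_list: "altc R S m = comp_list (map (\<lambda>i. if even i then R else S) [0..<m])"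
proof (induction R S m rule: altc.induct)
  case (3 R S n)
  have "[0..<Suc (Suc n)] = 0 # map Suc [0..<Suc n]" unfolding map_Suc_upt by (rule upt_conv_Cons) simp
  then have "map (\<lambda>i. if even i then R else S) [0..<Suc (Suc n)]
        = R # map (\<lambda>i. if even i then S else R) [0..<Suc n]" by (simp del: upt_Suc add: comp_def)
  then show ?case using 3 by (simp del: upt_Suc)
qed auto



locale setting =
  fixes A :: "'a set" and ops :: "(nat \<times> ('a list \<Rightarrow> 'a)) set"
    and F G :: "'a rel \<Rightarrow> 'a rel" and t :: "'a \<Rightarrow> 'a \<Rightarrow> 'a \<Rightarrow> 'a"
  assumes alg: "algebra A ops"
    and FAdm: "\<forall>R \<in> Adm A ops. F R \<in> Adm A ops"
    and GAdm: "\<forall>R \<in> Adm A ops. G R \<in> Adm A ops"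
    and tterm: "t \<in> term3 ops"
    and malcev: "\<forall>a\<in>A. \<forall>b\<in>A. \<forall>R\<in>Adm A ops. (a, b) \<in> R \<longrightarrow>
                   (a, t a b b) \<in> F R \<and> (t a a b, b) \<in> G R"
begin

lemma FA: "R \<in> Adm A ops \<Longrightarrow> F R \<in> Adm A ops" using FAdm by blast
lemma GA: "R \<in> Adm A ops \<Longrightarrow> G R \<in> Adm A ops" using GAdm by blast

lemma mF: "R \<in> Adm A ops \<Longrightarrow> (a,b) \<in> R \<Longrightarrow> (a, t a b b) \<in> F R"
  using malcev AdmD(1) by blast
lemma mG: "R \<in> Adm A ops \<Longrightarrow> (a,b) \<in> R \<Longrightarrow> (t a a b, b) \<in> G R"
  using malcev AdmD(1) by blast

lemma tc: "compatible ops R \<Longrightarrow> (a1,b1) \<in> R \<Longrightarrow> (a2,b2) \<in> R \<Longrightarrow> (a3,b3) \<in> R \<Longrightarrow> (t a1 a2 a3, t b1 b2 b3) \<in> R"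
  using term3_compat[OF tterm] by blast

lemma ccl_t: "K \<subseteq> A \<times> A \<Longrightarrow> (a1,b1) \<in> K \<Longrightarrow> (a2,b2) \<in> K \<Longrightarrow> (a3,b3) \<in> K \<Longrightarrow> (t a1 a2 a3, t b1 b2 b3) \<in> ccl A ops K"
  using tc[OF ccl_compat] ccl_incl[OF _ alg] by blast

lemma part_i:
  assumes R: "R \<in> Adm A ops" and S: "S \<in> Adm A ops"
    and th: "\<theta> \<subseteq> A \<times> A" "\<theta>1 \<subseteq> A \<times> A" "\<theta>2 \<subseteq> A \<times> A"
    and h: "(a, b) \<in> R" "(b, c) \<in> \<theta>1" "(a, d) \<in> \<theta>2" "(d, c) \<in> S" "(b, d) \<in> \<theta>"
  shows "(a, c) \<in> F R O ccl A ops (\<theta>2 \<union> \<theta> \<union> \<theta>1) O G S"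
proof -
  have "(a, t a b b) \<in> F R" using mF[OF R h(1)] .
  moreover have "(t a b b, t d d c) \<in> ccl A ops (\<theta>2 \<union> \<theta> \<union> \<theta>1)"
    by (rule ccl_t) (use th h in auto)
  moreover have "(t d d c, c) \<in> G S" using mG[OF S h(4)] .
  ultimately show ?thesis by blast
qed

lemma part_ii:
  assumes R: "R \<in> Adm A ops" and S: "S \<in> Adm A ops" and th: "\<theta> \<subseteq> A \<times> A"
  shows "R O \<theta> O S \<subseteq> F R O ccl A ops ((R O \<theta>) \<union> (\<theta> O S)) O G S"
proof (clarify)
  fix a b d c assume h: "(a,b) \<in> R" "(b,d) \<in> \<theta>" "(d,c) \<in> S"
  have bA: "b \<in> A" using h(2) th by auto
  have sub: "(R O \<theta>) \<union> (\<theta> O S) \<subseteq> A \<times> A" using AdmD(1)[OF R] AdmD(1)[OF S] th by blast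
  have "(a, t a b b) \<in> F R" using mF[OF R h(1)] .
  moreover have "(t a b b, t d d c) \<in> ccl A ops ((R O \<theta>) \<union> (\<theta> O S))"
    by (rule ccl_t[OF sub]) (use h AdmD(3)[OF R bA] in blast)+
  moreover have "(t d d c, c) \<in> G S" using mG[OF S h(3)] .
  ultimately show "(a, c) \<in> F R O ccl A ops ((R O \<theta>) \<union> (\<theta> O S)) O G S" by blast
qed

lemma part_iii1:
  assumes R: "R \<in> Adm A ops" and S: "S \<in> Adm A ops"
  shows "R O S \<subseteq> F R O ccl A ops (R \<union> S) O G S"
proof (clarify)
  fix a b c assume h: "(a,b) \<in> R" "(b,c) \<in> S"
  have bA: "b \<in> A" using h(2) AdmD(1)[OF S] by auto
  have sub: "R \<union> S \<subseteq> A \<times> A" using AdmD(1)[OF R] AdmD(1)[OF S] by blast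
  have "(a, t a b b) \<in> F R" using mF[OF R h(1)] .
  moreover have "(t a b b, t b b c) \<in> ccl A ops (R \<union> S)"
    by (rule ccl_t[OF sub]) (use h AdmD(3)[OF R bA] in blast)+
  moreover have "(t b b c, c) \<in> G S" using mG[OF S h(2)] .
  ultimately show "(a, c) \<in> F R O ccl A ops (R \<union> S) O G S" by blast
qed

lemma ccl_RS:
  assumes R: "R \<in> Adm A ops" and S: "S \<in> Adm A ops"
  shows "ccl A ops (R \<union> S) \<subseteq> S O R"
proof (rule ccl_least[OF _ alg])
  show "R \<union> S \<subseteq> A \<times> A" using AdmD(1)[OF R] AdmD(1)[OF S] by blast
  show "compatible ops (S O R)" using AdmD(2)[OF R] AdmD(2)[OF S] by (rule compat_relcomp[rotated])
  show "R \<union> S \<subseteq> S O R"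
  proof clarify
    fix a b assume "(a,b) \<in> R \<union> S"
    then show "(a,b) \<in> S O R"
    proof
      assume h: "(a,b) \<in> R"
      then have "a \<in> A" using AdmD(1)[OF R] by auto
      then show ?thesis using h AdmD(3)[OF S] by blast
    next
      assume h: "(a,b) \<in> S"
      then have "b \<in> A" using AdmD(1)[OF S] by auto
      then show ?thesis using h AdmD(3)[OF R] by blast
    qed
  qed
qed

lemma pos_incl:
  assumes T: "T \<in> Adm A ops" and D: "T \<subseteq> D" and X: "F T \<subseteq> X" and Y: "G T \<subseteq> Y"
  shows "T \<subseteq> X O D O Y"
proof clarify
  fix a b assume h: "(a,b) \<in> T"
  then have "a \<in> A" "b \<in> A" using AdmD(1)[OF T] by auto
  then have "(a,a) \<in> X" "(b,b) \<in> Y" using AdmD(3)[OF FA[OF T]] AdmD(3)[OF GA[OF T]] X Y by auto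
  then show "(a,b) \<in> X O D O Y" using h D by blast
qed

lemma neg_incl:
  assumes S: "S \<in> Adm A ops" and D: "S \<subseteq> D" and X: "F (S\<inverse>) \<subseteq> X" and Y: "G (S\<inverse>) \<subseteq> Y"
  shows "S\<inverse> \<subseteq> X O D O Y"
proof clarify
  fix b a assume h: "(b,a) \<in> S"
  have S': "S\<inverse> \<in> Adm A ops" using Adm_converse[OF S] .
  have aA: "a \<in> A" and bA: "b \<in> A" using h AdmD(1)[OF S] by auto
  have 1: "(a, t a b b) \<in> X" using mF[OF S'] h X by auto
  have 2: "(t a b b, t a a b) \<in> S" by (rule tc[OF AdmD(2)[OF S]]) (use h AdmD(3)[OF S aA] AdmD(3)[OF S bA] in auto)
  have 3: "(t a a b, b) \<in> Y" using mG[OF S'] h Y by auto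
  show "(a, b) \<in> X O D O Y" using 1 2 3 D by blast
qed

end


lemma comb: "P O P' \<subseteq> X \<Longrightarrow> Q \<subseteq> Y \<Longrightarrow> W O W' \<subseteq> Z \<Longrightarrow> P O P' O Q O W O W' \<subseteq> X O Y O Z"
proof -
  assume h: "P O P' \<subseteq> X" "Q \<subseteq> Y" "W O W' \<subseteq> Z"
  have "P O P' O Q O W O W' = (P O P') O Q O (W O W')" by (simp add: O_assoc)
  also have "\<dots> \<subseteq> X O Y O Z" using h by (intro relcomp_mono)
  finally show ?thesis .
qed

context setting begin

lemma UN_sub: "(\<And>i. i \<in> I \<Longrightarrow> X i \<in> Adm A ops) \<Longrightarrow> (\<Union>i\<in>I. X i) \<subseteq> A \<times> A"
  using AdmD(1) by blast

lemma in_ccl_UN: "(\<And>i. i \<in> I \<Longrightarrow> X i \<in> Adm A ops) \<Longrightarrow> j \<in> I \<Longrightarrow> X j \<subseteq> ccl A ops (\<Union>i\<in>I. X i)"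
  by (rule subset_trans[OF _ ccl_incl[OF UN_sub alg]]) auto

lemma ccl_UN_mono: "I \<subseteq> J \<Longrightarrow> ccl A ops (\<Union>i\<in>I. X i) \<subseteq> ccl A ops (\<Union>i\<in>J. X i)"
  by (rule ccl_mono) auto

lemma chain_aux:
  "\<forall>a b. b = a + Suc d \<longrightarrow> (\<forall>i\<in>{a..b}. Rs i \<in> Adm A ops) \<longrightarrow>
    comp_list (map Rs [a..<Suc b]) \<subseteq>
      F (Rs a) O comp_list (map (\<lambda>k. ccl A ops (\<Union>i\<in>{a..k}. F (Rs i))) [Suc a..<b])
      O ccl A ops (\<Union>i\<in>{a..b}. Rs i)
      O comp_list (map (\<lambda>k. ccl A ops (\<Union>i\<in>{k..b}. G (Rs i))) [Suc a..<b])
      O G (Rs b)"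
proof (induction d)
  case 0
  show ?case
  proof (intro allI impI)
    fix a b assume b: "b = a + Suc 0" and adm: "\<forall>i\<in>{a..b}. Rs i \<in> Adm A ops"
    have R: "Rs a \<in> Adm A ops" "Rs (Suc a) \<in> Adm A ops" using adm b by auto
    have "ccl A ops (Rs a \<union> Rs (Suc a)) \<subseteq> ccl A ops (\<Union>i\<in>{a..b}. Rs i)"
      using b by (intro ccl_mono Un_least UN_upper) auto
    then have "Rs a O Rs (Suc a) \<subseteq> F (Rs a) O ccl A ops (\<Union>i\<in>{a..b}. Rs i) O G (Rs (Suc a))"
      using part_iii1[OF R] by blast
    then show "comp_list (map Rs [a..<Suc b]) \<subseteq>
      F (Rs a) O comp_list (map (\<lambda>k. ccl A ops (\<Union>i\<in>{a..k}. F (Rs i))) [Suc a..<b])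
      O ccl A ops (\<Union>i\<in>{a..b}. Rs i)
      O comp_list (map (\<lambda>k. ccl A ops (\<Union>i\<in>{k..b}. G (Rs i))) [Suc a..<b])
      O G (Rs b)" using b by simp
  qed
next
  case (Suc d)
  show ?case
  proof (intro allI impI)
    fix a b assume b: "b = a + Suc (Suc d)" and adm: "\<forall>i\<in>{a..b}. Rs i \<in> Adm A ops"
    define c where "c = a + Suc d"
    have bc: "b = Suc c" and ac: "a < c" using b c_def by auto
    have admi: "\<And>i. a \<le> i \<Longrightarrow> i \<le> Suc c \<Longrightarrow> Rs i \<in> Adm A ops" using adm bc by auto
    have admF: "\<And>i. a \<le> i \<Longrightarrow> i \<le> Suc c \<Longrightarrow> F (Rs i) \<in> Adm A ops" using admi FA by auto
    have admG: "\<And>i. a \<le> i \<Longrightarrow> i \<le> Suc c \<Longrightarrow> G (Rs i) \<in> Adm A ops" using admi GA by auto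
    let ?th = "comp_list (map Rs [Suc a..<Suc c])"
    let ?CF = "comp_list (map (\<lambda>k. ccl A ops (\<Union>i\<in>{a..k}. F (Rs i))) [Suc a..<Suc c])"
    let ?C = "ccl A ops (\<Union>i\<in>{a..Suc c}. Rs i)"
    let ?CG = "comp_list (map (\<lambda>k. ccl A ops (\<Union>i\<in>{k..Suc c}. G (Rs i))) [Suc a..<Suc c])"
    have l1: "[a..<Suc (Suc c)] = [a..<Suc c] @ [Suc c]" by (rule upt_Suc_append) (use ac in simp)
    have l2: "[a..<Suc c] = a # [Suc a..<Suc c]" by (rule upt_conv_Cons) (use ac in simp)
    have l3: "[Suc a..<Suc (Suc c)] = [Suc a..<Suc c] @ [Suc c]" by (rule upt_Suc_append) (use ac in simp)
    have l4: "[Suc a..<Suc c] = Suc a # [Suc (Suc a)..<Suc c]" by (rule upt_conv_Cons) (use ac in simp)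
    have l5: "[Suc a..<Suc c] = [Suc a..<c] @ [c]" by (rule upt_Suc_append) (use ac in simp)
    have L: "comp_list (map Rs [a..<Suc b]) = Rs a O ?th O Rs (Suc c)"
      unfolding bc l1 l2 by (simp add: comp_list_append O_assoc del: upt_Suc)
    have L1: "Rs a O ?th = comp_list (map Rs [a..<Suc c])"
      unfolding l2 by (simp del: upt_Suc)
    have L2: "?th O Rs (Suc c) = comp_list (map Rs [Suc a..<Suc (Suc c)])"
      unfolding l3 by (simp add: comp_list_append del: upt_Suc)
    have subA: "\<And>i. a \<le> i \<Longrightarrow> i \<le> Suc c \<Longrightarrow> Rs i \<subseteq> A \<times> A" using admi AdmD(1) by blast
    have "\<forall>x\<in>set (map Rs [Suc a..<Suc c]). x \<subseteq> A \<times> A" using subA by (simp del: upt_Suc)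
    then have thA: "?th \<subseteq> A \<times> A"
      by (intro comp_list_sub) (use ac in auto)
    have step1: "Rs a O ?th O Rs (Suc c) \<subseteq> F (Rs a) O ccl A ops ((Rs a O ?th) \<union> (?th O Rs (Suc c))) O G (Rs (Suc c))"
      by (rule part_ii[OF admi admi thA]) (use ac in auto)
    have IH1: "comp_list (map Rs [a..<Suc c]) \<subseteq>
      F (Rs a) O comp_list (map (\<lambda>k. ccl A ops (\<Union>i\<in>{a..k}. F (Rs i))) [Suc a..<c])
      O ccl A ops (\<Union>i\<in>{a..c}. Rs i)
      O comp_list (map (\<lambda>k. ccl A ops (\<Union>i\<in>{k..c}. G (Rs i))) [Suc a..<c])
      O G (Rs c)" using Suc.IH[rule_format, of c a] c_def admi by auto
    have IH2: "comp_list (map Rs [Suc a..<Suc (Suc c)]) \<subseteq>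
      F (Rs (Suc a)) O comp_list (map (\<lambda>k. ccl A ops (\<Union>i\<in>{Suc a..k}. F (Rs i))) [Suc (Suc a)..<Suc c])
      O ccl A ops (\<Union>i\<in>{Suc a..Suc c}. Rs i)
      O comp_list (map (\<lambda>k. ccl A ops (\<Union>i\<in>{k..Suc c}. G (Rs i))) [Suc (Suc a)..<Suc c])
      O G (Rs (Suc c))" using Suc.IH[rule_format, of "Suc c" "Suc a"] c_def admi by auto
    have CFe: "?CF = ccl A ops (\<Union>i\<in>{a..Suc a}. F (Rs i)) O comp_list (map (\<lambda>k. ccl A ops (\<Union>i\<in>{a..k}. F (Rs i))) [Suc (Suc a)..<Suc c])"
      unfolding l4 by (simp del: upt_Suc)
    have CGe: "?CG = comp_list (map (\<lambda>k. ccl A ops (\<Union>i\<in>{k..Suc c}. G (Rs i))) [Suc a..<c]) O ccl A ops (\<Union>i\<in>{c..Suc c}. G (Rs i))"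
      unfolding l5 by (simp add: comp_list_append del: upt_Suc)
    have F1: "F (Rs a) \<subseteq> ccl A ops (\<Union>i\<in>{a..Suc a}. F (Rs i))"
      by (rule in_ccl_UN) (use admF ac in auto)
    have F2: "F (Rs (Suc a)) \<subseteq> ccl A ops (\<Union>i\<in>{a..Suc a}. F (Rs i))"
      by (rule in_ccl_UN) (use admF ac in auto)
    have G1: "G (Rs c) \<subseteq> ccl A ops (\<Union>i\<in>{c..Suc c}. G (Rs i))"
      by (rule in_ccl_UN) (use admG ac in auto)
    have G2: "G (Rs (Suc c)) \<subseteq> ccl A ops (\<Union>i\<in>{c..Suc c}. G (Rs i))"
      by (rule in_ccl_UN) (use admG ac in auto)
    have CF1: "comp_list (map (\<lambda>k. ccl A ops (\<Union>i\<in>{a..k}. F (Rs i))) [Suc a..<c])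
       \<subseteq> comp_list (map (\<lambda>k. ccl A ops (\<Union>i\<in>{a..k}. F (Rs i))) [Suc (Suc a)..<Suc c])"
      by (rule comp_list_shift_up) (rule ccl_UN_mono, auto)
    have CF2: "comp_list (map (\<lambda>k. ccl A ops (\<Union>i\<in>{Suc a..k}. F (Rs i))) [Suc (Suc a)..<Suc c])
       \<subseteq> comp_list (map (\<lambda>k. ccl A ops (\<Union>i\<in>{a..k}. F (Rs i))) [Suc (Suc a)..<Suc c])"
      by (rule comp_list_mono_map) (rule ccl_UN_mono, auto)
    have CG1: "comp_list (map (\<lambda>k. ccl A ops (\<Union>i\<in>{k..c}. G (Rs i))) [Suc a..<c])
       \<subseteq> comp_list (map (\<lambda>k. ccl A ops (\<Union>i\<in>{k..Suc c}. G (Rs i))) [Suc a..<c])"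
      by (rule comp_list_mono_map) (rule ccl_UN_mono, auto)
    have CG2: "comp_list (map (\<lambda>k. ccl A ops (\<Union>i\<in>{k..Suc c}. G (Rs i))) [Suc (Suc a)..<Suc c])
       \<subseteq> comp_list (map (\<lambda>k. ccl A ops (\<Union>i\<in>{k..Suc c}. G (Rs i))) [Suc a..<c])"
      by (rule comp_list_shift_down) (rule ccl_UN_mono, auto)
    have C1: "ccl A ops (\<Union>i\<in>{a..c}. Rs i) \<subseteq> ?C" by (rule ccl_UN_mono) auto
    have C2: "ccl A ops (\<Union>i\<in>{Suc a..Suc c}. Rs i) \<subseteq> ?C" by (rule ccl_UN_mono) auto
    have M1: "Rs a O ?th \<subseteq> ?CF O ?C O ?CG"
      unfolding L1 CFe CGe
      by (rule subset_trans[OF IH1 comb[OF relcomp_mono[OF F1 CF1] C1 relcomp_mono[OF CG1 G1]]])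
    have M2: "?th O Rs (Suc c) \<subseteq> ?CF O ?C O ?CG"
      unfolding L2 CFe CGe
      by (rule subset_trans[OF IH2 comb[OF relcomp_mono[OF F2 CF2] C2 relcomp_mono[OF CG2 G2]]])
    have Mc: "compatible ops (?CF O ?C O ?CG)"
      by (intro compat_relcomp compat_comp_list ccl_compat) (auto simp: ccl_compat)
    have uA: "(Rs a O ?th) \<union> (?th O Rs (Suc c)) \<subseteq> A \<times> A"
      using thA AdmD(1)[OF admi[of a]] AdmD(1)[OF admi[of "Suc c"]] ac by auto
    have "ccl A ops ((Rs a O ?th) \<union> (?th O Rs (Suc c))) \<subseteq> ?CF O ?C O ?CG"
      by (rule ccl_least[OF uA alg _ Mc]) (use M1 M2 in blast)
    then have "comp_list (map Rs [a..<Suc b]) \<subseteq> F (Rs a) O (?CF O ?C O ?CG) O G (Rs (Suc c))"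
      unfolding L using step1 by (blast intro: subset_trans relcomp_mono)
    then show "comp_list (map Rs [a..<Suc b]) \<subseteq>
      F (Rs a) O comp_list (map (\<lambda>k. ccl A ops (\<Union>i\<in>{a..k}. F (Rs i))) [Suc a..<b])
      O ccl A ops (\<Union>i\<in>{a..b}. Rs i)
      O comp_list (map (\<lambda>k. ccl A ops (\<Union>i\<in>{k..b}. G (Rs i))) [Suc a..<b])
      O G (Rs b)" unfolding bc by (simp add: O_assoc del: upt_Suc)
  qed
qed

end


lemma rplus_eq:
  assumes R: "R \<in> Adm A ops" and S: "S \<in> Adm A ops"
  shows "rplus R S = (R \<union> S)\<^sup>+"
proof
  have "altc R S n \<subseteq> (R \<union> S)\<^sup>+" if "n \<ge> 1" for n
    using that
  proof (induction R S n rule: altc.induct)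
    case (3 R S n)
    then have "altc S R (Suc n) \<subseteq> (S \<union> R)\<^sup>+" by simp
    then have "R O altc S R (Suc n) \<subseteq> (R \<union> S)\<^sup>+ O (R \<union> S)\<^sup>+"
      by (intro relcomp_mono) (auto simp: Un_commute)
    moreover have "(R \<union> S)\<^sup>+ O (R \<union> S)\<^sup>+ \<subseteq> (R \<union> S)\<^sup>+" by (rule trans_O_subset[OF trans_trancl])
    ultimately show ?case by (simp only: altc.simps)
  qed auto
  then show "rplus R S \<subseteq> (R \<union> S)\<^sup>+" unfolding rplus_def by (intro UN_least) simp
next
  have altS: "altc S R (Suc n) = S O altc R S n" if "n \<ge> 1" for n
    using that by (cases n) auto
  show "(R \<union> S)\<^sup>+ \<subseteq> rplus R S"
  proof clarify
    fix a b assume "(a,b) \<in> (R \<union> S)\<^sup>+"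
    then have "\<exists>n\<ge>1. (a,b) \<in> altc R S n"
    proof (induction rule: converse_trancl_induct)
      case (base a)
      then show ?case
      proof
        assume "(a,b) \<in> R" then show ?thesis by (intro exI[of _ 1]) auto
      next
        assume h: "(a,b) \<in> S"
        then have "a \<in> A" using AdmD(1)[OF S] by auto
        then have "(a,a) \<in> R" using AdmD(3)[OF R] by auto
        then have "(a,b) \<in> altc R S 2" using h by (simp add: numeral_2_eq_2) blast
        then show ?thesis by (intro exI[of _ 2]) auto
      qed
    next
      case (step a y)
      then obtain n where n: "n \<ge> 1" "(y,b) \<in> altc R S n" by blast
      from step(1) show ?case
      proof
        assume h: "(a,y) \<in> R"
        then have "y \<in> A" using AdmD(1)[OF R] by auto
        then have "(y,y) \<in> S" using AdmD(3)[OF S] by auto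
        then have "(a,b) \<in> R O (S O altc R S n)" using h n by blast
        then have "(a,b) \<in> altc R S (Suc (Suc n))" using altS[OF n(1)] by simp
        then show ?thesis by (intro exI[of _ "Suc (Suc n)"]) auto
      next
        assume h: "(a,y) \<in> S"
        then have "a \<in> A" using AdmD(1)[OF S] by auto
        then have "(a,a) \<in> R" using AdmD(3)[OF R] by auto
        then have "(a,b) \<in> R O (S O altc R S n)" using h n by blast
        then have "(a,b) \<in> altc R S (Suc (Suc n))" using altS[OF n(1)] by simp
        then show ?thesis by (intro exI[of _ "Suc (Suc n)"]) auto
      qed
    qed
    then show "(a,b) \<in> rplus R S" unfolding rplus_def by auto
  qed
qed

lemma Cg_sub:
  assumes TT: "\<forall>T\<in>TT. T \<in> Adm A ops" and ne: "TT \<noteq> {}" and alg: "algebra A ops"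
    and sy: "sym (\<Union>TT)" and U: "U \<subseteq> \<Union>TT"
  shows "Cg A ops U \<subseteq> (\<Union>TT)\<^sup>+"
  unfolding Cg_def
proof (rule Inter_lower, safe)
  show "equiv A ((\<Union>TT)\<^sup>+)"
  proof (rule equivI)
    show "(\<Union>TT)\<^sup>+ \<subseteq> A \<times> A" by (rule trancl_Union_sub[OF TT])
    obtain T where T: "T \<in> TT" using ne by blast
    show "refl_on A ((\<Union>TT)\<^sup>+)" unfolding refl_on_def
      using AdmD(3)[of T A ops] TT T by blast
    show "sym ((\<Union>TT)\<^sup>+)" by (rule sym_trancl[OF sy])
    show "trans ((\<Union>TT)\<^sup>+)" by (rule trans_trancl)
  qed
  show "compatible ops ((\<Union>TT)\<^sup>+)" by (rule compat_trancl_Union[OF alg TT ne])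
  fix a b assume "(a,b) \<in> U" then show "(a,b) \<in> (\<Union>TT)\<^sup>+" using U by auto
qed

context setting begin

lemma chain:
  assumes "a < b" "\<forall>i\<in>{a..b}. Rs i \<in> Adm A ops"
  shows "comp_list (map Rs [a..<Suc b]) \<subseteq>
      F (Rs a) O comp_list (map (\<lambda>k. ccl A ops (\<Union>i\<in>{a..k}. F (Rs i))) [Suc a..<b])
      O ccl A ops (\<Union>i\<in>{a..b}. Rs i)
      O comp_list (map (\<lambda>k. ccl A ops (\<Union>i\<in>{k..b}. G (Rs i))) [Suc a..<b])
      O G (Rs b)"
proof -
  have e: "b = a + Suc (b - a - 1)" using assms(1) by simp
  show ?thesis
    using mp[OF mp[OF chain_aux[of "b - a - 1" Rs, THEN spec[of _ a], THEN spec[of _ b]] e] assms(2)] .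
qed

lemma XIII_gen:
  assumes TT: "\<forall>T\<in>TT. T \<in> Adm A ops" and ne: "TT \<noteq> {}"
  shows "(\<Union>TT)\<^sup>+ \<subseteq> (\<Union>(F ` TT))\<^sup>+ O ccl A ops (\<Union>TT) O (\<Union>(G ` TT))\<^sup>+"
proof clarify
  fix x y assume "(x,y) \<in> (\<Union>TT)\<^sup>+"
  from trancl_comp_list[OF this] obtain ws where ws: "ws \<noteq> []" "set ws \<subseteq> TT" "(x,y) \<in> comp_list ws"
    by blast
  let ?X = "(\<Union>(F ` TT))\<^sup>+" and ?Y = "(\<Union>(G ` TT))\<^sup>+"
  have FT: "\<forall>T\<in>F ` TT. T \<in> Adm A ops" using TT FA by auto
  have GT: "\<forall>T\<in>G ` TT. T \<in> Adm A ops" using TT GA by auto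
  have Xc: "compatible ops ?X" by (rule compat_trancl_Union[OF alg FT]) (use ne in auto)
  have Yc: "compatible ops ?Y" by (rule compat_trancl_Union[OF alg GT]) (use ne in auto)
  have FX: "F T \<subseteq> ?X" if "T \<in> TT" for T using that by auto
  have GY: "G T \<subseteq> ?Y" if "T \<in> TT" for T using that by auto
  have wsA: "\<And>i. i < length ws \<Longrightarrow> ws ! i \<in> Adm A ops" using ws TT nth_mem by blast
  have wsT: "\<And>i. i < length ws \<Longrightarrow> ws ! i \<in> TT" using ws nth_mem by blast
  show "(x,y) \<in> ?X O ccl A ops (\<Union>TT) O ?Y"
  proof (cases "length ws = 1")
    case True
    then obtain T where T: "ws = [T]" by (cases ws) auto
    then have h: "(x,y) \<in> T" "T \<in> TT" using ws by auto
    then have "(x,y) \<in> ccl A ops (\<Union>TT)"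
      using ccl_incl[OF _ alg, of "\<Union>TT"] TT AdmD(1) by blast
    moreover have "(x,x) \<in> ?X" "(y,y) \<in> ?Y"
      using h AdmD(1)[of T A ops] AdmD(3)[OF FA[of T]] AdmD(3)[OF GA[of T]] TT FX GY by blast+
    ultimately show ?thesis by blast
  next
    case False
    define b where "b = length ws - 1"
    have b: "0 < b" "Suc b = length ws" using False ws(1) b_def by (cases ws; auto)+
    have eq: "comp_list ws = comp_list (map (nth ws) [0..<Suc b])" using b(2) map_nth by metis
    have ch: "comp_list ws \<subseteq> F (ws!0) O comp_list (map (\<lambda>k. ccl A ops (\<Union>i\<in>{0..k}. F (ws!i))) [Suc 0..<b])
      O ccl A ops (\<Union>i\<in>{0..b}. ws!i)
      O comp_list (map (\<lambda>k. ccl A ops (\<Union>i\<in>{k..b}. G (ws!i))) [Suc 0..<b])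
      O G (ws!b)" unfolding eq by (rule chain) (use b wsA in auto)
    have Xt: "F (ws!0) O comp_list (map (\<lambda>k. ccl A ops (\<Union>i\<in>{0..k}. F (ws!i))) [Suc 0..<b]) \<subseteq> ?X"
    proof (rule comp_list_trans_left[OF trans_trancl])
      show "F (ws!0) \<subseteq> ?X" using FX[OF wsT[of 0]] b ws(1) by simp
      show "\<forall>x\<in>set (map (\<lambda>k. ccl A ops (\<Union>i\<in>{0..k}. F (ws!i))) [Suc 0..<b]). x \<subseteq> ?X"
      proof
        fix x assume "x \<in> set (map (\<lambda>k. ccl A ops (\<Union>i\<in>{0..k}. F (ws!i))) [Suc 0..<b])"
        then obtain k where k: "Suc 0 \<le> k" "k < b" and x: "x = ccl A ops (\<Union>i\<in>{0..k}. F (ws!i))" by auto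
        show "x \<subseteq> ?X" unfolding x
        proof (rule ccl_least[OF _ alg _ Xc])
          show "(\<Union>i\<in>{0..k}. F (ws!i)) \<subseteq> A \<times> A" by (rule UN_sub, rule FA, rule wsA) (use k b in auto)
          show "(\<Union>i\<in>{0..k}. F (ws!i)) \<subseteq> ?X" by (rule UN_least, rule FX, rule wsT) (use k b in auto)
        qed
      qed
    qed
    have Yt: "comp_list (map (\<lambda>k. ccl A ops (\<Union>i\<in>{k..b}. G (ws!i))) [Suc 0..<b]) O G (ws!b) \<subseteq> ?Y"
    proof (rule comp_list_trans_right[OF trans_trancl])
      show "G (ws!b) \<subseteq> ?Y" using GY[OF wsT[of b]] b by simp
      show "\<forall>x\<in>set (map (\<lambda>k. ccl A ops (\<Union>i\<in>{k..b}. G (ws!i))) [Suc 0..<b]). x \<subseteq> ?Y"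
      proof
        fix x assume "x \<in> set (map (\<lambda>k. ccl A ops (\<Union>i\<in>{k..b}. G (ws!i))) [Suc 0..<b])"
        then obtain k where k: "Suc 0 \<le> k" "k < b" and x: "x = ccl A ops (\<Union>i\<in>{k..b}. G (ws!i))" by auto
        show "x \<subseteq> ?Y" unfolding x
        proof (rule ccl_least[OF _ alg _ Yc])
          show "(\<Union>i\<in>{k..b}. G (ws!i)) \<subseteq> A \<times> A" by (rule UN_sub, rule GA, rule wsA) (use k b in auto)
          show "(\<Union>i\<in>{k..b}. G (ws!i)) \<subseteq> ?Y" by (rule UN_least, rule GY, rule wsT) (use k b in auto)
        qed
      qed
    qed
    have Ct: "ccl A ops (\<Union>i\<in>{0..b}. ws!i) \<subseteq> ccl A ops (\<Union>TT)"
      by (rule ccl_mono, rule UN_least, rule Union_upper, rule wsT) (use b in auto)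
    show ?thesis using subset_trans[OF ch comb[OF Xt Ct Yt]] ws(3) by blast
  qed
qed

lemma GEN:
  assumes TT: "\<forall>T\<in>TT. T \<in> Adm A ops" and ne: "TT \<noteq> {}" and Dc: "compatible ops D"
    and inc: "\<Union>TT \<subseteq> (\<Union>(F ` TT))\<^sup>+ O D O (\<Union>(G ` TT))\<^sup>+"
  shows "(\<Union>TT)\<^sup>+ \<subseteq> (\<Union>(F ` TT))\<^sup>+ O D O (\<Union>(G ` TT))\<^sup>+"
proof -
  let ?X = "(\<Union>(F ` TT))\<^sup>+" and ?Y = "(\<Union>(G ` TT))\<^sup>+"
  have FT: "\<forall>T\<in>F ` TT. T \<in> Adm A ops" using TT FA by auto
  have GT: "\<forall>T\<in>G ` TT. T \<in> Adm A ops" using TT GA by auto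
  have Xc: "compatible ops ?X" by (rule compat_trancl_Union[OF alg FT]) (use ne in auto)
  have Yc: "compatible ops ?Y" by (rule compat_trancl_Union[OF alg GT]) (use ne in auto)
  have Kc: "compatible ops (?X O D O ?Y)" by (intro compat_relcomp Xc Yc Dc)
  have sub: "\<Union>TT \<subseteq> A \<times> A" using TT AdmD(1) by blast
  have "ccl A ops (\<Union>TT) \<subseteq> ?X O D O ?Y" by (rule ccl_least[OF sub alg inc Kc])
  then have "?X O ccl A ops (\<Union>TT) O ?Y \<subseteq> ?X O (?X O D O ?Y) O ?Y" by (intro relcomp_mono) auto
  also have "\<dots> = (?X O ?X) O D O (?Y O ?Y)" by (simp add: O_assoc)
  also have "\<dots> \<subseteq> ?X O D O ?Y"
    using trans_O_subset[OF trans_trancl, of "\<Union>(F ` TT)"] trans_O_subset[OF trans_trancl, of "\<Union>(G ` TT)"]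
    by (intro relcomp_mono) auto
  finally show ?thesis using XIII_gen[OF TT ne] by blast
qed

end


context setting begin

lemma part_iii2:
  assumes R: "R \<in> Adm A ops" and S: "S \<in> Adm A ops"
  shows "F R O ccl A ops (R \<union> S) O G S \<subseteq> F R O S O R O G S"
proof -
  have "F R O ccl A ops (R \<union> S) O G S \<subseteq> F R O (S O R) O G S"
    by (intro relcomp_mono subset_refl ccl_RS[OF R S])
  then show ?thesis by (simp add: O_assoc)
qed

lemma part_iv:
  assumes R: "R \<in> Adm A ops" and S: "S \<in> Adm A ops"
  shows "altc R S (n + 2) \<subseteq>
         F R O (ccl A ops (F R \<union> F S)) ^^ n O ccl A ops (R \<union> S)
           O (ccl A ops (G R \<union> G S)) ^^ n O G (if even n then S else R)"
proof -
  define Rs where "Rs = (\<lambda>i::nat. if even i then R else S)"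
  have adm: "\<forall>i\<in>{0..Suc n}. Rs i \<in> Adm A ops" using R S by (simp add: Rs_def)
  have eq: "altc R S (n + 2) = comp_list (map Rs [0..<Suc (Suc n)])"
    unfolding altc_comp_list Rs_def by simp
  have ch: "comp_list (map Rs [0..<Suc (Suc n)]) \<subseteq>
      F (Rs 0) O comp_list (map (\<lambda>k. ccl A ops (\<Union>i\<in>{0..k}. F (Rs i))) [Suc 0..<Suc n])
      O ccl A ops (\<Union>i\<in>{0..Suc n}. Rs i)
      O comp_list (map (\<lambda>k. ccl A ops (\<Union>i\<in>{k..Suc n}. G (Rs i))) [Suc 0..<Suc n])
      O G (Rs (Suc n))" by (rule chain) (use adm in auto)
  have FRs: "F (Rs i) \<subseteq> F R \<union> F S" for i by (simp add: Rs_def)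
  have GRs: "G (Rs i) \<subseteq> G R \<union> G S" for i by (simp add: Rs_def)
  have RRs: "Rs i \<subseteq> R \<union> S" for i by (simp add: Rs_def)
  have h1: "comp_list (map (\<lambda>k. ccl A ops (\<Union>i\<in>{0..k}. F (Rs i))) [Suc 0..<Suc n]) \<subseteq> (ccl A ops (F R \<union> F S)) ^^ n"
  proof -
    have "comp_list (map (\<lambda>k. ccl A ops (\<Union>i\<in>{0..k}. F (Rs i))) [Suc 0..<Suc n])
       \<subseteq> (ccl A ops (F R \<union> F S)) ^^ length (map (\<lambda>k. ccl A ops (\<Union>i\<in>{0..k}. F (Rs i))) [Suc 0..<Suc n])"
      by (rule comp_list_pow) (auto intro!: ccl_mono UN_least FRs)
    then show ?thesis by (simp del: upt_Suc)
  qed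
  have h3: "comp_list (map (\<lambda>k. ccl A ops (\<Union>i\<in>{k..Suc n}. G (Rs i))) [Suc 0..<Suc n]) \<subseteq> (ccl A ops (G R \<union> G S)) ^^ n"
  proof -
    have "comp_list (map (\<lambda>k. ccl A ops (\<Union>i\<in>{k..Suc n}. G (Rs i))) [Suc 0..<Suc n])
       \<subseteq> (ccl A ops (G R \<union> G S)) ^^ length (map (\<lambda>k. ccl A ops (\<Union>i\<in>{k..Suc n}. G (Rs i))) [Suc 0..<Suc n])"
      by (rule comp_list_pow) (auto intro!: ccl_mono UN_least GRs)
    then show ?thesis by (simp del: upt_Suc)
  qed
  have h2: "ccl A ops (\<Union>i\<in>{0..Suc n}. Rs i) \<subseteq> ccl A ops (R \<union> S)"
    by (intro ccl_mono UN_least RRs)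
  have h0: "Rs 0 = R" "G (Rs (Suc n)) = G (if even n then S else R)" by (simp_all add: Rs_def)
  show ?thesis unfolding eq
    using subset_trans[OF ch relcomp_mono[OF subset_refl relcomp_mono[OF h1 relcomp_mono[OF h2 relcomp_mono[OF h3 subset_refl]]]]]
    unfolding h0 .
qed

lemma part_v1:
  assumes R: "R \<in> Adm A ops" and S: "S \<in> Adm A ops"
  shows "rplus R S \<subseteq> rplus (F R) (F S) O ccl A ops (R \<union> S) O rplus (G R) (G S)"
  using XIII_gen[of "{R,S}"] R S
  by (simp add: rplus_eq[OF R S] rplus_eq[OF FA[OF R] FA[OF S]] rplus_eq[OF GA[OF R] GA[OF S]])

lemma part_v2:
  assumes R: "R \<in> Adm A ops" and S: "S \<in> Adm A ops"
  shows "X O ccl A ops (R \<union> S) O Y \<subseteq> X O R O S O Y"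
proof -
  have "X O ccl A ops (R \<union> S) O Y \<subseteq> X O (R O S) O Y"
    using ccl_RS[OF S R] by (intro relcomp_mono subset_refl) (simp add: Un_commute)
  then show ?thesis by (simp add: O_assoc)
qed

lemma part_vi: assumes R: "R \<in> Adm A ops" shows "R O R \<subseteq> F R O R O G R"
  using part_iii1[OF R R] ccl_id[OF AdmD(1)[OF R] alg AdmD(2)[OF R]] by simp

lemma part_vii: assumes R: "R \<in> Adm A ops" shows "R ^^ (n + 1) \<subseteq> (F R) ^^ n O R O (G R) ^^ n"
proof (cases n)
  case 0 then show ?thesis by simp
next
  case (Suc k)
  define Rs where "Rs = (\<lambda>i::nat. R)"
  have FR: "ccl A ops (F R) = F R" using ccl_id[OF AdmD(1)[OF FA[OF R]] alg AdmD(2)[OF FA[OF R]]] .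
  have GR: "ccl A ops (G R) = G R" using ccl_id[OF AdmD(1)[OF GA[OF R]] alg AdmD(2)[OF GA[OF R]]] .
  have RR: "ccl A ops R = R" using ccl_id[OF AdmD(1)[OF R] alg AdmD(2)[OF R]] .
  have rep: "comp_list (replicate m X) = X ^^ m" for m and X :: "'a rel"
    by (induction m) (simp_all add: relpow_commute)
  have eq: "R ^^ (n + 1) = comp_list (map Rs [0..<Suc (Suc k)])"
    unfolding Rs_def map_replicate_const rep using Suc by simp
  have ch: "comp_list (map Rs [0..<Suc (Suc k)]) \<subseteq>
      F (Rs 0) O comp_list (map (\<lambda>k. ccl A ops (\<Union>i\<in>{0..k}. F (Rs i))) [Suc 0..<Suc k])
      O ccl A ops (\<Union>i\<in>{0..Suc k}. Rs i)
      O comp_list (map (\<lambda>k'. ccl A ops (\<Union>i\<in>{k'..Suc k}. G (Rs i))) [Suc 0..<Suc k])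
      O G (Rs (Suc k))" by (rule chain) (use R in \<open>auto simp: Rs_def\<close>)
  have h1: "F R O comp_list (map (\<lambda>k. ccl A ops (\<Union>i\<in>{0..k}. F (Rs i))) [Suc 0..<Suc k]) \<subseteq> F R ^^ n"
  proof -
    have "comp_list (map (\<lambda>k. ccl A ops (\<Union>i\<in>{0..k}. F (Rs i))) [Suc 0..<Suc k])
       \<subseteq> (F R) ^^ length (map (\<lambda>k. ccl A ops (\<Union>i\<in>{0..k}. F (Rs i))) [Suc 0..<Suc k])"
      by (rule comp_list_pow) (auto simp: Rs_def FR)
    then have "comp_list (map (\<lambda>k. ccl A ops (\<Union>i\<in>{0..k}. F (Rs i))) [Suc 0..<Suc k]) \<subseteq> F R ^^ k"
      by (simp del: upt_Suc)
    then have "F R O comp_list (map (\<lambda>k. ccl A ops (\<Union>i\<in>{0..k}. F (Rs i))) [Suc 0..<Suc k]) \<subseteq> F R O F R ^^ k"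
      by (intro relcomp_mono) auto
    then show ?thesis using Suc by (simp add: relpow_commute)
  qed
  have h3: "comp_list (map (\<lambda>k'. ccl A ops (\<Union>i\<in>{k'..Suc k}. G (Rs i))) [Suc 0..<Suc k]) O G R \<subseteq> G R ^^ n"
  proof -
    have "comp_list (map (\<lambda>k'. ccl A ops (\<Union>i\<in>{k'..Suc k}. G (Rs i))) [Suc 0..<Suc k])
       \<subseteq> (G R) ^^ length (map (\<lambda>k'. ccl A ops (\<Union>i\<in>{k'..Suc k}. G (Rs i))) [Suc 0..<Suc k])"
      by (rule comp_list_pow) (auto simp: Rs_def GR)
    then have "comp_list (map (\<lambda>k'. ccl A ops (\<Union>i\<in>{k'..Suc k}. G (Rs i))) [Suc 0..<Suc k]) \<subseteq> G R ^^ k"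
      by (simp del: upt_Suc)
    then have "comp_list (map (\<lambda>k'. ccl A ops (\<Union>i\<in>{k'..Suc k}. G (Rs i))) [Suc 0..<Suc k]) O G R \<subseteq> G R ^^ k O G R"
      by (intro relcomp_mono) auto
    then show ?thesis using Suc by simp
  qed
  have h2: "ccl A ops (\<Union>i\<in>{0..Suc k}. Rs i) \<subseteq> R" by (simp add: Rs_def RR)
  have h0: "Rs 0 = R" "Rs (Suc k) = R" by (simp_all add: Rs_def)
  show ?thesis unfolding eq using subset_trans[OF ch[unfolded h0] comb[OF h1 h2 h3]] .
qed

end


context setting begin

lemma part_viii: assumes R: "R \<in> Adm A ops" shows "R\<^sup>+ \<subseteq> (F R)\<^sup>+ O R O (G R)\<^sup>+"
  using XIII_gen[of "{R}"] R ccl_id[OF AdmD(1)[OF R] alg AdmD(2)[OF R]] by simp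

lemma part_ix: assumes R: "R \<in> Adm A ops"
  shows "R\<inverse> \<subseteq> F (R\<inverse>) O R O G (R\<inverse>) \<and> R \<subseteq> F R O R\<inverse> O G R"
proof
  show "R\<inverse> \<subseteq> F (R\<inverse>) O R O G (R\<inverse>)" by (rule neg_incl[OF R]) auto
  show "R \<subseteq> F R O R\<inverse> O G R" using neg_incl[OF Adm_converse[OF R], of "R\<inverse>" "F R" "G R"] by simp
qed

lemma part_x1:
  assumes R: "R \<in> Adm A ops" and S: "S \<in> Adm A ops"
  shows "rplus R (S\<inverse>) \<subseteq> rplus (F R) (F (S\<inverse>)) O ccl A ops (R \<union> S) O rplus (G R) (G (S\<inverse>))"
proof -
  have S': "S\<inverse> \<in> Adm A ops" by (rule Adm_converse[OF S])
  let ?X = "(\<Union>(F ` {R, S\<inverse>}))\<^sup>+" and ?Y = "(\<Union>(G ` {R, S\<inverse>}))\<^sup>+" and ?D = "ccl A ops (R \<union> S)"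
  have RS: "R \<union> S \<subseteq> A \<times> A" using AdmD(1)[OF R] AdmD(1)[OF S] by blast
  have inc: "\<Union>{R, S\<inverse>} \<subseteq> ?X O ?D O ?Y"
  proof -
    have "R \<subseteq> ?X O ?D O ?Y" by (rule pos_incl[OF R]) (use ccl_incl[OF RS alg] in auto)
    moreover have "S\<inverse> \<subseteq> ?X O ?D O ?Y" by (rule neg_incl[OF S]) (use ccl_incl[OF RS alg] in auto)
    ultimately show ?thesis by simp
  qed
  have "(\<Union>{R, S\<inverse>})\<^sup>+ \<subseteq> ?X O ?D O ?Y"
    by (rule GEN[OF _ _ ccl_compat inc]) (use R S' in auto)
  then show ?thesis
    by (simp add: rplus_eq[OF R S'] rplus_eq[OF FA[OF R] FA[OF S']] rplus_eq[OF GA[OF R] GA[OF S']])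
qed

lemma part_xi: assumes R: "R \<in> Adm A ops"
  shows "Cg A ops R \<subseteq> rplus (F R) (F (R\<inverse>)) O R O rplus (G R) (G (R\<inverse>))"
proof -
  have R': "R\<inverse> \<in> Adm A ops" by (rule Adm_converse[OF R])
  let ?X = "(\<Union>(F ` {R, R\<inverse>}))\<^sup>+" and ?Y = "(\<Union>(G ` {R, R\<inverse>}))\<^sup>+"
  have Cg: "Cg A ops R \<subseteq> (\<Union>{R, R\<inverse>})\<^sup>+"
    by (rule Cg_sub[OF _ _ alg]) (use R R' in \<open>auto simp: sym_def\<close>)
  have inc: "\<Union>{R, R\<inverse>} \<subseteq> ?X O R O ?Y"
  proof -
    have "R \<subseteq> ?X O R O ?Y" by (rule pos_incl[OF R]) auto
    moreover have "R\<inverse> \<subseteq> ?X O R O ?Y" by (rule neg_incl[OF R]) auto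
    ultimately show ?thesis by simp
  qed
  have "(\<Union>{R, R\<inverse>})\<^sup>+ \<subseteq> ?X O R O ?Y"
    by (rule GEN[OF _ _ AdmD(2)[OF R] inc]) (use R R' in auto)
  with Cg show ?thesis
    by (simp add: rplus_eq[OF FA[OF R] FA[OF R']] rplus_eq[OF GA[OF R] GA[OF R']])
qed

lemma part_xii:
  assumes n: "2 \<le> n" and adm: "\<forall>i\<in>{1..n}. Rs i \<in> Adm A ops"
  shows "comp_list (map Rs [1..<n+1]) \<subseteq>
         F (Rs 1)
         O comp_list (map (\<lambda>k. ccl A ops (\<Union>i\<in>{1..k}. F (Rs i))) [2..<n])
         O ccl A ops (\<Union>i\<in>{1..n}. Rs i)
         O comp_list (map (\<lambda>k. ccl A ops (\<Union>i\<in>{k..n}. G (Rs i))) [2..<n])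
         O G (Rs n)"
proof -
  have "1 < n" using n by simp
  from chain[OF this adm] show ?thesis by (simp add: numeral_2_eq_2 del: upt_Suc)
qed

lemma part_xiii:
  assumes n: "1 \<le> n" and adm: "\<forall>i\<in>{1..n}. Rs i \<in> Adm A ops"
  shows "rplus_list (map Rs [1..<n+1]) \<subseteq>
         rplus_list (map (\<lambda>i. F (Rs i)) [1..<n+1])
         O ccl A ops (\<Union>i\<in>{1..n}. Rs i)
         O rplus_list (map (\<lambda>i. G (Rs i)) [1..<n+1])"
proof -
  have s: "set [1..<n+1] = {1..n}" by auto
  have "(\<Union>(Rs ` {1..n}))\<^sup>+ \<subseteq> (\<Union>(F ` Rs ` {1..n}))\<^sup>+ O ccl A ops (\<Union>(Rs ` {1..n})) O (\<Union>(G ` Rs ` {1..n}))\<^sup>+"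
    by (rule XIII_gen) (use adm n in auto)
  then show ?thesis unfolding rplus_list_eq set_map s by (simp add: image_image)
qed

lemma part_xiv:
  assumes n: "1 \<le> n" and adm: "\<forall>i\<in>{1..n}. Rs i \<in> Adm A ops"
  shows "Cg A ops (\<Union>i\<in>{1..n}. Rs i) \<subseteq>
         rplus_list (concat (map (\<lambda>i. [F (Rs i), F ((Rs i)\<inverse>)]) [1..<n+1]))
         O ccl A ops (\<Union>i\<in>{1..n}. Rs i)
         O rplus_list (concat (map (\<lambda>i. [G (Rs i), G ((Rs i)\<inverse>)]) [1..<n+1]))"
proof -
  define TT where "TT = Rs ` {1..n} \<union> (\<lambda>i. (Rs i)\<inverse>) ` {1..n}"
  have TTa: "\<forall>T\<in>TT. T \<in> Adm A ops" using adm Adm_converse unfolding TT_def by auto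
  have ne: "TT \<noteq> {}" using n unfolding TT_def by auto
  have sy: "sym (\<Union>TT)" unfolding TT_def sym_def by blast
  have Cg: "Cg A ops (\<Union>i\<in>{1..n}. Rs i) \<subseteq> (\<Union>TT)\<^sup>+"
    by (rule Cg_sub[OF TTa ne alg sy]) (auto simp: TT_def)
  let ?X = "(\<Union>(F ` TT))\<^sup>+" and ?Y = "(\<Union>(G ` TT))\<^sup>+" and ?D = "ccl A ops (\<Union>i\<in>{1..n}. Rs i)"
  have UA: "(\<Union>i\<in>{1..n}. Rs i) \<subseteq> A \<times> A" using adm AdmD(1) by blast
  have FX: "\<And>T. T \<in> TT \<Longrightarrow> F T \<subseteq> ?X" by auto
  have GY: "\<And>T. T \<in> TT \<Longrightarrow> G T \<subseteq> ?Y" by auto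
  have inc: "\<Union>TT \<subseteq> ?X O ?D O ?Y"
  proof (rule Union_least)
    fix T assume "T \<in> TT"
    then obtain i where i: "i \<in> {1..n}" and T: "T = Rs i \<or> T = (Rs i)\<inverse>" unfolding TT_def by blast
    have Ri: "Rs i \<in> Adm A ops" using adm i by blast
    have RD: "Rs i \<subseteq> ?D" using ccl_incl[OF UA alg] i by blast
    from T show "T \<subseteq> ?X O ?D O ?Y"
    proof
      assume T: "T = Rs i"
      show ?thesis unfolding T by (rule pos_incl[OF Ri RD FX GY]) (use i in \<open>auto simp: TT_def\<close>)
    next
      assume T: "T = (Rs i)\<inverse>"
      show ?thesis unfolding T by (rule neg_incl[OF Ri RD FX GY]) (use i in \<open>auto simp: TT_def\<close>)
    qed
  qed
  have main: "(\<Union>TT)\<^sup>+ \<subseteq> ?X O ?D O ?Y" by (rule GEN[OF TTa ne ccl_compat inc])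
  have sF: "set (concat (map (\<lambda>i. [F (Rs i), F ((Rs i)\<inverse>)]) [1..<n+1])) = F ` TT"
    unfolding TT_def by auto
  have sG: "set (concat (map (\<lambda>i. [G (Rs i), G ((Rs i)\<inverse>)]) [1..<n+1])) = G ` TT"
    unfolding TT_def by auto
  show ?thesis unfolding rplus_list_eq sF sG using Cg main by blast
qed

end

theorem theorem1:
  fixes A :: "'a set" and ops :: "(nat \<times> ('a list \<Rightarrow> 'a)) set"
    and F G :: "'a rel \<Rightarrow> 'a rel" and t :: "'a \<Rightarrow> 'a \<Rightarrow> 'a \<Rightarrow> 'a"
  assumes alg: "algebra A ops"
    and FAdm: "\<forall>R \<in> Adm A ops. F R \<in> Adm A ops"
    and GAdm: "\<forall>R \<in> Adm A ops. G R \<in> Adm A ops"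
    and tterm: "t \<in> term3 ops"
    and malcev: "\<forall>a\<in>A. \<forall>b\<in>A. \<forall>R\<in>Adm A ops. (a, b) \<in> R \<longrightarrow>
                   (a, t a b b) \<in> F R \<and> (t a a b, b) \<in> G R"
  shows
   \<comment> \<open>(i)\<close>
   "(\<forall>R\<in>Adm A ops. \<forall>S\<in>Adm A ops. \<forall>\<theta> \<theta>1 \<theta>2.
       \<theta> \<subseteq> A \<times> A \<and> \<theta>1 \<subseteq> A \<times> A \<and> \<theta>2 \<subseteq> A \<times> A \<longrightarrow>
       (\<forall>a\<in>A. \<forall>b\<in>A. \<forall>c\<in>A. \<forall>d\<in>A.
          (a, b) \<in> R \<and> (b, c) \<in> \<theta>1 \<and> (a, d) \<in> \<theta>2 \<and> (d, c) \<in> S \<and> (b, d) \<in> \<theta> \<longrightarrow>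
          (a, c) \<in> F R O ccl A ops (\<theta>2 \<union> \<theta> \<union> \<theta>1) O G S))
    \<and> \<comment> \<open>(ii)\<close>
    (\<forall>R\<in>Adm A ops. \<forall>S\<in>Adm A ops. \<forall>\<theta>. \<theta> \<subseteq> A \<times> A \<longrightarrow>
       R O \<theta> O S \<subseteq> F R O ccl A ops ((R O \<theta>) \<union> (\<theta> O S)) O G S)
    \<and> \<comment> \<open>(iii)\<close>
    (\<forall>R\<in>Adm A ops. \<forall>S\<in>Adm A ops.
       R O S \<subseteq> F R O ccl A ops (R \<union> S) O G S
     \<and> F R O ccl A ops (R \<union> S) O G S \<subseteq> F R O S O R O G S)
    \<and> \<comment> \<open>(iv)\<close>
    (\<forall>R\<in>Adm A ops. \<forall>S\<in>Adm A ops. \<forall>n::nat.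
       altc R S (n + 2) \<subseteq>
         F R O (ccl A ops (F R \<union> F S)) ^^ n O ccl A ops (R \<union> S)
           O (ccl A ops (G R \<union> G S)) ^^ n O G (if even n then S else R))
    \<and> \<comment> \<open>(v)\<close>
    (\<forall>R\<in>Adm A ops. \<forall>S\<in>Adm A ops.
       rplus R S \<subseteq> rplus (F R) (F S) O ccl A ops (R \<union> S) O rplus (G R) (G S)
     \<and> rplus (F R) (F S) O ccl A ops (R \<union> S) O rplus (G R) (G S)
         \<subseteq> rplus (F R) (F S) O R O S O rplus (G R) (G S))
    \<and> \<comment> \<open>(vi)\<close>
    (\<forall>R\<in>Adm A ops. R O R \<subseteq> F R O R O G R)
    \<and> \<comment> \<open>(vii)\<close>
    (\<forall>R\<in>Adm A ops. \<forall>n::nat. R ^^ (n + 1) \<subseteq> (F R) ^^ n O R O (G R) ^^ n)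
    \<and> \<comment> \<open>(viii)\<close>
    (\<forall>R\<in>Adm A ops. R\<^sup>+ \<subseteq> (F R)\<^sup>+ O R O (G R)\<^sup>+)
    \<and> \<comment> \<open>(ix)\<close>
    (\<forall>R\<in>Adm A ops. R\<inverse> \<subseteq> F (R\<inverse>) O R O G (R\<inverse>) \<and> R \<subseteq> F R O R\<inverse> O G R)
    \<and> \<comment> \<open>(x)\<close>
    (\<forall>R\<in>Adm A ops. \<forall>S\<in>Adm A ops.
       rplus R (S\<inverse>) \<subseteq> rplus (F R) (F (S\<inverse>)) O ccl A ops (R \<union> S) O rplus (G R) (G (S\<inverse>))
     \<and> rplus (F R) (F (S\<inverse>)) O ccl A ops (R \<union> S) O rplus (G R) (G (S\<inverse>))
         \<subseteq> rplus (F R) (F (S\<inverse>)) O R O S O rplus (G R) (G (S\<inverse>)))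
    \<and> \<comment> \<open>(xi)\<close>
    (\<forall>R\<in>Adm A ops. Cg A ops R \<subseteq> rplus (F R) (F (R\<inverse>)) O R O rplus (G R) (G (R\<inverse>)))
    \<and> \<comment> \<open>(xii)\<close>
    (\<forall>(Rs :: nat \<Rightarrow> 'a rel) n. 2 \<le> n \<and> (\<forall>i\<in>{1..n}. Rs i \<in> Adm A ops) \<longrightarrow>
       comp_list (map Rs [1..<n+1]) \<subseteq>
         F (Rs 1)
         O comp_list (map (\<lambda>k. ccl A ops (\<Union>i\<in>{1..k}. F (Rs i))) [2..<n])
         O ccl A ops (\<Union>i\<in>{1..n}. Rs i)
         O comp_list (map (\<lambda>k. ccl A ops (\<Union>i\<in>{k..n}. G (Rs i))) [2..<n])
         O G (Rs n))
    \<and> \<comment> \<open>(xiii)\<close>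
    (\<forall>(Rs :: nat \<Rightarrow> 'a rel) n. 1 \<le> n \<and> (\<forall>i\<in>{1..n}. Rs i \<in> Adm A ops) \<longrightarrow>
       rplus_list (map Rs [1..<n+1]) \<subseteq>
         rplus_list (map (\<lambda>i. F (Rs i)) [1..<n+1])
         O ccl A ops (\<Union>i\<in>{1..n}. Rs i)
         O rplus_list (map (\<lambda>i. G (Rs i)) [1..<n+1]))
    \<and> \<comment> \<open>(xiv)\<close>
    (\<forall>(Rs :: nat \<Rightarrow> 'a rel) n. 1 \<le> n \<and> (\<forall>i\<in>{1..n}. Rs i \<in> Adm A ops) \<longrightarrow>
       Cg A ops (\<Union>i\<in>{1..n}. Rs i) \<subseteq>
         rplus_list (concat (map (\<lambda>i. [F (Rs i), F ((Rs i)\<inverse>)]) [1..<n+1]))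
         O ccl A ops (\<Union>i\<in>{1..n}. Rs i)
         O rplus_list (concat (map (\<lambda>i. [G (Rs i), G ((Rs i)\<inverse>)]) [1..<n+1])))"
proof -
  interpret S: setting A ops F G t by (rule setting.intro[OF alg FAdm GAdm tterm malcev])
  have i: "(\<forall>R\<in>Adm A ops. \<forall>S\<in>Adm A ops. \<forall>\<theta> \<theta>1 \<theta>2.
       \<theta> \<subseteq> A \<times> A \<and> \<theta>1 \<subseteq> A \<times> A \<and> \<theta>2 \<subseteq> A \<times> A \<longrightarrow>
       (\<forall>a\<in>A. \<forall>b\<in>A. \<forall>c\<in>A. \<forall>d\<in>A.
          (a, b) \<in> R \<and> (b, c) \<in> \<theta>1 \<and> (a, d) \<in> \<theta>2 \<and> (d, c) \<in> S \<and> (b, d) \<in> \<theta> \<longrightarrow>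
          (a, c) \<in> F R O ccl A ops (\<theta>2 \<union> \<theta> \<union> \<theta>1) O G S))"
    by (intro ballI allI impI conjI; (elim conjE)?; rule S.part_i; assumption)
  have ii: "(\<forall>R\<in>Adm A ops. \<forall>S\<in>Adm A ops. \<forall>\<theta>. \<theta> \<subseteq> A \<times> A \<longrightarrow>
       R O \<theta> O S \<subseteq> F R O ccl A ops ((R O \<theta>) \<union> (\<theta> O S)) O G S)"
    by (intro ballI allI impI conjI; (elim conjE)?; rule S.part_ii; assumption)
  have iii: "(\<forall>R\<in>Adm A ops. \<forall>S\<in>Adm A ops.
       R O S \<subseteq> F R O ccl A ops (R \<union> S) O G S
     \<and> F R O ccl A ops (R \<union> S) O G S \<subseteq> F R O S O R O G S)"
    by (intro ballI allI impI conjI; (elim conjE)?; rule S.part_iii1 S.part_iii2; assumption)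
  have iv: "(\<forall>R\<in>Adm A ops. \<forall>S\<in>Adm A ops. \<forall>n::nat.
       altc R S (n + 2) \<subseteq>
         F R O (ccl A ops (F R \<union> F S)) ^^ n O ccl A ops (R \<union> S)
           O (ccl A ops (G R \<union> G S)) ^^ n O G (if even n then S else R))"
    by (intro ballI allI impI conjI; (elim conjE)?; rule S.part_iv; assumption)
  have v: "(\<forall>R\<in>Adm A ops. \<forall>S\<in>Adm A ops.
       rplus R S \<subseteq> rplus (F R) (F S) O ccl A ops (R \<union> S) O rplus (G R) (G S)
     \<and> rplus (F R) (F S) O ccl A ops (R \<union> S) O rplus (G R) (G S)
         \<subseteq> rplus (F R) (F S) O R O S O rplus (G R) (G S))"
    by (intro ballI allI impI conjI; (elim conjE)?; rule S.part_v1 S.part_v2; assumption)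
  have vi: "(\<forall>R\<in>Adm A ops. R O R \<subseteq> F R O R O G R)"
    by (intro ballI allI impI conjI; (elim conjE)?; rule S.part_vi; assumption)
  have vii: "(\<forall>R\<in>Adm A ops. \<forall>n::nat. R ^^ (n + 1) \<subseteq> (F R) ^^ n O R O (G R) ^^ n)"
    by (intro ballI allI impI conjI; (elim conjE)?; rule S.part_vii; assumption)
  have viii: "(\<forall>R\<in>Adm A ops. R\<^sup>+ \<subseteq> (F R)\<^sup>+ O R O (G R)\<^sup>+)"
    by (intro ballI allI impI conjI; (elim conjE)?; rule S.part_viii; assumption)
  have ix: "(\<forall>R\<in>Adm A ops. R\<inverse> \<subseteq> F (R\<inverse>) O R O G (R\<inverse>) \<and> R \<subseteq> F R O R\<inverse> O G R)"
    by (intro ballI; rule S.part_ix; assumption)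
  have x: "(\<forall>R\<in>Adm A ops. \<forall>S\<in>Adm A ops.
       rplus R (S\<inverse>) \<subseteq> rplus (F R) (F (S\<inverse>)) O ccl A ops (R \<union> S) O rplus (G R) (G (S\<inverse>))
     \<and> rplus (F R) (F (S\<inverse>)) O ccl A ops (R \<union> S) O rplus (G R) (G (S\<inverse>))
         \<subseteq> rplus (F R) (F (S\<inverse>)) O R O S O rplus (G R) (G (S\<inverse>)))"
    by (intro ballI allI impI conjI; (elim conjE)?; rule S.part_x1 S.part_v2; assumption)
  have xi: "(\<forall>R\<in>Adm A ops. Cg A ops R \<subseteq> rplus (F R) (F (R\<inverse>)) O R O rplus (G R) (G (R\<inverse>)))"
    by (intro ballI allI impI conjI; (elim conjE)?; rule S.part_xi; assumption)
  have xii: "(\<forall>(Rs :: nat \<Rightarrow> 'a rel) n. 2 \<le> n \<and> (\<forall>i\<in>{1..n}. Rs i \<in> Adm A ops) \<longrightarrow>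
       comp_list (map Rs [1..<n+1]) \<subseteq>
         F (Rs 1)
         O comp_list (map (\<lambda>k. ccl A ops (\<Union>i\<in>{1..k}. F (Rs i))) [2..<n])
         O ccl A ops (\<Union>i\<in>{1..n}. Rs i)
         O comp_list (map (\<lambda>k. ccl A ops (\<Union>i\<in>{k..n}. G (Rs i))) [2..<n])
         O G (Rs n))"
    by (intro ballI allI impI conjI; (elim conjE)?; rule S.part_xii; assumption)
  have xiii: "(\<forall>(Rs :: nat \<Rightarrow> 'a rel) n. 1 \<le> n \<and> (\<forall>i\<in>{1..n}. Rs i \<in> Adm A ops) \<longrightarrow>
       rplus_list (map Rs [1..<n+1]) \<subseteq>
         rplus_list (map (\<lambda>i. F (Rs i)) [1..<n+1])
         O ccl A ops (\<Union>i\<in>{1..n}. Rs i)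
         O rplus_list (map (\<lambda>i. G (Rs i)) [1..<n+1]))"
    by (intro ballI allI impI conjI; (elim conjE)?; rule S.part_xiii; assumption)
  have xiv: "(\<forall>(Rs :: nat \<Rightarrow> 'a rel) n. 1 \<le> n \<and> (\<forall>i\<in>{1..n}. Rs i \<in> Adm A ops) \<longrightarrow>
       Cg A ops (\<Union>i\<in>{1..n}. Rs i) \<subseteq>
         rplus_list (concat (map (\<lambda>i. [F (Rs i), F ((Rs i)\<inverse>)]) [1..<n+1]))
         O ccl A ops (\<Union>i\<in>{1..n}. Rs i)
         O rplus_list (concat (map (\<lambda>i. [G (Rs i), G ((Rs i)\<inverse>)]) [1..<n+1])))"
    by (intro ballI allI impI conjI; (elim conjE)?; rule S.part_xiv; assumption)
  show ?thesis
    by (intro conjI) (rule i ii iii iv v vi vii viii ix x xi xii xiii xiv)+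
qed

end
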